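(* Let $G$ be a finite simple graph of order $n\ge 4$ without isolated vertices and with maximum degree $\Delta(G)=n-3$. Fix a vertex $v$ with $\deg(v)=\Delta(G)$. (i) If $G$ is disconnected, then $\gamma_t(G)=4$ and $TDV(v)=n-3$. (ii) If $G$ is connected, then either $\gamma_t(G)=2$ and $TDV(v)\le n-3$, or $\gamma_t(G)=3$ and $TDV(v)\le \left(\frac{n-3}{2}\right)^2+2(n-4)$.
   Context: A set $D \subseteq V(G)$ is a total dominating set of $G$ if every vertex of $G$ has a neighbor in $D$. $\gamma_t(G)$ is the minimum cardinality of a total dominating set; a minimum one is a $\gamma_t(G)$-set. $TDV(v)$ is the number of $\gamma_t(G)$-sets containing $v$. *)

theory Defs
  imports Complex_Main
begin

definition simple_graph :: "'a set \<Rightarrow> ('a \<Rightarrow> 'a \<Rightarrow> bool) \<Rightarrow> bool" where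
  "simple_graph V E \<longleftrightarrow> finite V \<and> (\<forall>x y. E x y \<longrightarrow> x \<in> V \<and> y \<in> V)
     \<and> (\<forall>x y. E x y \<longrightarrow> E y x) \<and> (\<forall>x. \<not> E x x)"

definition neighbors :: "'a set \<Rightarrow> ('a \<Rightarrow> 'a \<Rightarrow> bool) \<Rightarrow> 'a \<Rightarrow> 'a set" where
  "neighbors V E v = {u \<in> V. E v u}"

definition degree :: "'a set \<Rightarrow> ('a \<Rightarrow> 'a \<Rightarrow> bool) \<Rightarrow> 'a \<Rightarrow> nat" where
  "degree V E v = card (neighbors V E v)"

definition max_degree :: "'a set \<Rightarrow> ('a \<Rightarrow> 'a \<Rightarrow> bool) \<Rightarrow> nat" where
  "max_degree V E = Max (degree V E ` V)"

definition no_isolated :: "'a set \<Rightarrow> ('a \<Rightarrow> 'a \<Rightarrow> bool) \<Rightarrow> bool" where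
  "no_isolated V E \<longleftrightarrow> (\<forall>v\<in>V. neighbors V E v \<noteq> {})"

definition connected_graph :: "'a set \<Rightarrow> ('a \<Rightarrow> 'a \<Rightarrow> bool) \<Rightarrow> bool" where
  "connected_graph V E \<longleftrightarrow> V \<noteq> {} \<and> (\<forall>x\<in>V. \<forall>y\<in>V. E\<^sup>*\<^sup>* x y)"

definition total_dominating :: "'a set \<Rightarrow> ('a \<Rightarrow> 'a \<Rightarrow> bool) \<Rightarrow> 'a set \<Rightarrow> bool" where
  "total_dominating V E D \<longleftrightarrow> D \<subseteq> V \<and> (\<forall>v\<in>V. \<exists>u\<in>D. E v u)"

definition gamma_t :: "'a set \<Rightarrow> ('a \<Rightarrow> 'a \<Rightarrow> bool) \<Rightarrow> nat" where
  "gamma_t V E = (LEAST k. \<exists>D. total_dominating V E D \<and> card D = k)"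

definition gamma_t_sets :: "'a set \<Rightarrow> ('a \<Rightarrow> 'a \<Rightarrow> bool) \<Rightarrow> 'a set set" where
  "gamma_t_sets V E = {D. total_dominating V E D \<and> card D = gamma_t V E}"

definition TDV :: "'a set \<Rightarrow> ('a \<Rightarrow> 'a \<Rightarrow> bool) \<Rightarrow> 'a \<Rightarrow> nat" where
  "TDV V E v = card {D \<in> gamma_t_sets V E. v \<in> D}"

end

theory Submission
  imports Defs
begin

lemma gt_le: "total_dominating V E D \<Longrightarrow> gamma_t V E \<le> card D"
  unfolding gamma_t_def by (rule Least_le) blast

lemma gt_ex: "total_dominating V E D0 \<Longrightarrow> \<exists>D. total_dominating V E D \<and> card D = gamma_t V E"
  unfolding gamma_t_def by (rule LeastI_ex) blast

lemma td_ge2: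
  assumes "simple_graph V E" "w \<in> V" "total_dominating V E D"
  shows "2 \<le> card D"
proof -
  have fin: "finite D" using assms unfolding simple_graph_def total_dominating_def
    by (meson finite_subset)
  obtain u where u: "u \<in> D" "E w u" using assms unfolding total_dominating_def by blast
  have "u \<in> V" using u assms unfolding simple_graph_def by blast
  then obtain u' where u': "u' \<in> D" "E u u'" using assms unfolding total_dominating_def by blast
  have "u \<noteq> u'" using u' assms unfolding simple_graph_def by blast
  hence "card {u,u'} = 2" by simp
  moreover have "{u,u'} \<subseteq> D" using u u' by blast
  ultimately show ?thesis using card_mono[OF fin] by metis
qed

theorem theorem2p17:
  fixes V :: "'a set" and E :: "'a \<Rightarrow> 'a \<Rightarrow> bool" and n :: nat and v :: 'a
  assumes "simple_graph V E"
    and "n = card V" and "n \<ge> 4"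
    and "no_isolated V E"
    and "max_degree V E = n - 3"
    and "v \<in> V" and "degree V E v = max_degree V E"
  shows "(\<not> connected_graph V E \<longrightarrow> gamma_t V E = 4 \<and> TDV V E v = n - 3)
       \<and> (connected_graph V E \<longrightarrow>
            (gamma_t V E = 2 \<and> TDV V E v \<le> n - 3)
          \<or> (gamma_t V E = 3 \<and> real (TDV V E v) \<le> ((real n - 3) / 2)^2 + 2 * (real n - 4)))"
proof -
  have fin: "finite V" and inV: "\<And>x y. E x y \<Longrightarrow> x \<in> V \<and> y \<in> V"
    and sym: "\<And>x y. E x y \<Longrightarrow> E y x" and irr: "\<And>x. \<not> E x x"
    using assms(1) unfolding simple_graph_def by blast+
  define N where "N = neighbors V E v"
  have NV: "N \<subseteq> V" and vN: "v \<notin> N" and Nd: "\<And>x. x \<in> N \<longleftrightarrow> x \<in> V \<and> E v x"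
    using irr unfolding N_def neighbors_def by auto
  have cN: "card N = n - 3" using assms(5,7) unfolding N_def degree_def by simp
  have finN: "finite N" using NV fin finite_subset by blast
  have "card (V - insert v N) = card V - card (insert v N)"
    using NV assms(6) fin by (intro card_Diff_subset) (auto intro: finite_subset)
  also have "card (insert v N) = n - 2" using cN vN finN assms(3) by simp
  finally have "card (V - insert v N) = 2" using assms(2,3) by simp
  then obtain a b where ab: "V - insert v N = {a,b}" "a \<noteq> b" by (auto simp: card_2_iff)
  have aV: "a \<in> V" "b \<in> V" "a \<notin> N" "b \<notin> N" "a \<noteq> v" "b \<noteq> v" using ab by blast+
  have nva: "\<not> E v a" "\<not> E a v" "\<not> E v b" "\<not> E b v" using aV Nd sym by blast+
  have Vs: "\<And>w. w \<in> V \<Longrightarrow> w = v \<or> w \<in> N \<or> w = a \<or> w = b" using ab by blast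
  have TD: "\<And>D. total_dominating V E D \<longleftrightarrow> D \<subseteq> V \<and> (\<forall>w\<in>V. \<exists>u\<in>D. E w u)"
    unfolding total_dominating_def by simp
  have ge2: "\<And>D. total_dominating V E D \<Longrightarrow> 2 \<le> card D"
    using td_ge2[OF assms(1,6)] .
  have noiso: "\<And>w. w \<in> V \<Longrightarrow> \<exists>u. E w u"
    using assms(4) unfolding no_isolated_def neighbors_def by blast

  define P where "P \<longleftrightarrow> (\<exists>x\<in>N. E a x \<or> E b x)"
  have P_conn: "connected_graph V E" if hP: "P"
  proof -
    define R where "R w \<longleftrightarrow> E\<^sup>*\<^sup>* v w \<and> E\<^sup>*\<^sup>* w v" for w
    have Rv: "R v" unfolding R_def by simp
    have Rstep: "R w" if "R u" "E u w" for u w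
      using that sym[OF that(2)] unfolding R_def
      by (meson rtranclp.rtrancl_into_rtrancl converse_rtranclp_into_rtranclp)
    have RN: "R x" if "x \<in> N" for x using Rstep[OF Rv] Nd that by blast
    have Rab: "R a \<and> R b"
    proof (cases "\<exists>x\<in>N. E a x")
      case True
      then obtain x where x: "x \<in> N" "E a x" by blast
      have Ra: "R a" using Rstep[OF RN[OF x(1)] sym[OF x(2)]] .
      show ?thesis
      proof (cases "\<exists>y\<in>N. E b y")
        case True
        then obtain y where "y \<in> N" "E b y" by blast
        then show ?thesis using Ra RN Rstep sym by blast
      next
        case False
        obtain u where u: "E b u" using noiso aV by blast
        have "u = a" using Vs[of u] inV[OF u] u False nva irr by blast
        then show ?thesis using Ra Rstep sym u by blast
      qed
    next
      case False
      then obtain y where y: "y \<in> N" "E b y" using hP P_def by blast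
      have Rb: "R b" using Rstep[OF RN[OF y(1)] sym[OF y(2)]] .
      obtain u where u: "E a u" using noiso aV by blast
      have "u = b" using Vs[of u] inV[OF u] u False nva irr by blast
      then show ?thesis using Rb Rstep sym u by blast
    qed
    have "R w" if "w \<in> V" for w using Vs[OF that] Rv RN Rab by blast
    hence RR: "E\<^sup>*\<^sup>* v w \<and> E\<^sup>*\<^sup>* w v" if "w \<in> V" for w using that unfolding R_def by blast
    show ?thesis unfolding connected_graph_def
    proof (intro conjI ballI)
      show "V \<noteq> {}" using assms(6) by blast
      fix x y assume "x \<in> V" "y \<in> V"
      then show "E\<^sup>*\<^sup>* x y" using RR rtranclp_trans[of E x v y] by blast
    qed
  qed
  have nP_facts: "E a b \<and> (\<forall>u. E a u \<longrightarrow> u = b) \<and> (\<forall>u. E b u \<longrightarrow> u = a)" if "\<not> P"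
  proof -
    have A: "\<forall>u. E a u \<longrightarrow> u = b" using that P_def Vs inV nva irr by blast
    have B: "\<forall>u. E b u \<longrightarrow> u = a" using that P_def Vs inV nva irr by blast
    obtain u where u: "E a u" using noiso aV by blast
    show ?thesis using A B u by blast
  qed
  have nP_disc: "\<not> connected_graph V E" if "\<not> P"
  proof -
    have "w \<in> V \<and> w \<noteq> a \<and> w \<noteq> b" if "E\<^sup>*\<^sup>* v w" for w
      using that
    proof (induction rule: rtranclp_induct)
      case base then show ?case using assms(6) aV by blast
    next
      case (step y z)
      then show ?case using nP_facts[OF \<open>\<not> P\<close>] inV sym by blast
    qed
    then show ?thesis unfolding connected_graph_def using assms(6) aV by blast
  qed

  have finD: "\<And>D. total_dominating V E D \<Longrightarrow> finite D"
    using fin unfolding total_dominating_def by (meson finite_subset)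
  have Nne: "N \<noteq> {}" using cN assms(3) by auto
  have part1: "gamma_t V E = 4 \<and> TDV V E v = n - 3" if nc: "\<not> connected_graph V E"
  proof -
    have nP: "\<not> P" using P_conn nc by blast
    note F = nP_facts[OF nP]
    have D4: "total_dominating V E {a,b,v,u}" if "u \<in> N" for u
      unfolding TD using that aV NV assms(6) Vs F Nd sym by blast
    have c4: "card {a,b,v,u} = 4" if "u \<in> N" for u
    proof -
      have "u \<noteq> a" "u \<noteq> b" "u \<noteq> v" using that aV vN by blast+
      then show ?thesis using aV ab(2) by simp
    qed
    have lb: "4 \<le> card D" if hD: "total_dominating V E D" for D
    proof -
      have aD: "a \<in> D" "b \<in> D" using hD F aV unfolding TD by blast+
      obtain r where r: "r \<in> D" "E v r" using hD assms(6) unfolding TD by blast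
      have rN: "r \<in> N" using r Nd inV by blast
      obtain s where s: "s \<in> D" "E r s" using hD rN NV unfolding TD by blast
      have "s \<noteq> r" "s \<noteq> a" "s \<noteq> b" using s irr F sym rN aV by blast+
      moreover have "r \<noteq> a" "r \<noteq> b" using rN aV by blast+
      ultimately have "card {a,b,r,s} = 4" using ab(2) by auto
      moreover have "{a,b,r,s} \<subseteq> D" using aD r s by blast
      ultimately show ?thesis using card_mono[OF finD[OF hD]] by metis
    qed
    obtain u0 where u0: "u0 \<in> N" using Nne by blast
    have g4: "gamma_t V E = 4"
    proof -
      have "gamma_t V E \<le> 4" using gt_le[OF D4[OF u0]] c4[OF u0] by simp
      moreover obtain D where "total_dominating V E D" "card D = gamma_t V E"
        using gt_ex[OF D4[OF u0]] by blast
      ultimately show ?thesis using lb by force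
    qed
    have eq: "{D \<in> gamma_t_sets V E. v \<in> D} = (\<lambda>u. {a,b,v,u}) ` N"
    proof
      show "(\<lambda>u. {a,b,v,u}) ` N \<subseteq> {D \<in> gamma_t_sets V E. v \<in> D}"
        using D4 c4 g4 unfolding gamma_t_sets_def by auto
    next
      show "{D \<in> gamma_t_sets V E. v \<in> D} \<subseteq> (\<lambda>u. {a,b,v,u}) ` N"
      proof
        fix D assume "D \<in> {D \<in> gamma_t_sets V E. v \<in> D}"
        hence D: "total_dominating V E D" "card D = 4" "v \<in> D"
          using g4 unfolding gamma_t_sets_def by auto
        have aD: "a \<in> D" "b \<in> D" using D F aV unfolding TD by blast+
        obtain r where r: "r \<in> D" "E v r" using D assms(6) unfolding TD by blast
        have rN: "r \<in> N" using r Nd inV by blast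
        have "{a,b,v,r} = D" using card_subset_eq[OF finD[OF D(1)], of "{a,b,v,r}"]
          aD r D c4[OF rN] by auto
        then show "D \<in> (\<lambda>u. {a,b,v,u}) ` N" using rN by blast
      qed
    qed
    have inj: "inj_on (\<lambda>u. {a,b,v,u}) N"
    proof
      fix x y assume "x \<in> N" "y \<in> N" "{a,b,v,x} = {a,b,v,y}"
      hence "x \<in> {a,b,v,y}" by blast
      moreover have "x \<noteq> a" "x \<noteq> b" "x \<noteq> v" using \<open>x \<in> N\<close> aV vN by blast+
      ultimately show "x = y" by blast
    qed
    show ?thesis unfolding TDV_def eq card_image[OF inj] cN using g4 by simp
  qed

  have part2: "(gamma_t V E = 2 \<and> TDV V E v \<le> n - 3)
          \<or> (gamma_t V E = 3 \<and> real (TDV V E v) \<le> ((real n - 3) / 2)^2 + 2 * (real n - 4))"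
    if cc: "connected_graph V E"
  proof -
    have hP: "P" using nP_disc cc by blast
    have ex3: "\<exists>D. total_dominating V E D \<and> card D \<le> 3"
    proof (cases "\<exists>x\<in>N. E a x")
      case True
      then obtain x where x: "x \<in> N" "E a x" by blast
      show ?thesis
      proof (cases "\<exists>y\<in>N. E b y")
        case True
        then obtain y where y: "y \<in> N" "E b y" by blast
        have "total_dominating V E {v,x,y}"
          unfolding TD using x y NV assms(6) Vs Nd sym by blast
        moreover have "card {v,x,y} \<le> 3" by (simp add: card_insert_le_m1)
        ultimately show ?thesis by blast
      next
        case False
        obtain u where u: "E b u" using noiso aV by blast
        have "u = a" using Vs[of u] inV[OF u] u False nva irr by blast
        hence "total_dominating V E {v,x,a}"
          unfolding TD using x u NV aV assms(6) Vs Nd sym by blast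
        moreover have "card {v,x,a} \<le> 3" by (simp add: card_insert_le_m1)
        ultimately show ?thesis by blast
      qed
    next
      case False
      then obtain y where y: "y \<in> N" "E b y" using hP P_def by blast
      obtain u where u: "E a u" using noiso aV by blast
      have "u = b" using Vs[of u] inV[OF u] u False nva irr by blast
      hence "total_dominating V E {v,y,b}"
        unfolding TD using y u NV aV assms(6) Vs Nd sym by blast
      moreover have "card {v,y,b} \<le> 3" by (simp add: card_insert_le_m1)
      ultimately show ?thesis by blast
    qed
    then obtain D0 where D0: "total_dominating V E D0" "card D0 \<le> 3" by blast
    have g3: "gamma_t V E \<le> 3" using gt_le[OF D0(1)] D0(2) by simp
    have g2: "2 \<le> gamma_t V E" using gt_ex[OF D0(1)] ge2 by force
    have n5: "5 \<le> n"
    proof -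
      obtain x where x: "x \<in> N" "E a x \<or> E b x" using hP P_def by blast
      have "{v,a} \<subseteq> neighbors V E x \<or> {v,b} \<subseteq> neighbors V E x"
        using x Nd sym aV assms(6) unfolding neighbors_def by blast
      moreover have "finite (neighbors V E x)" using fin unfolding neighbors_def by simp
      ultimately have "2 \<le> degree V E x" unfolding degree_def using aV
        by (metis card_2_iff card_mono)
      moreover have "degree V E x \<le> max_degree V E" unfolding max_degree_def
        using fin x NV by (intro Max_ge) auto
      ultimately show ?thesis using assms(5,3) by linarith
    qed

    have "gamma_t V E = 2 \<or> gamma_t V E = 3" using g2 g3 by linarith
    then show ?thesis
    proof
      assume G2: "gamma_t V E = 2"
      have "{D \<in> gamma_t_sets V E. v \<in> D} \<subseteq> (\<lambda>u. {v,u}) ` N"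
      proof
        fix D assume "D \<in> {D \<in> gamma_t_sets V E. v \<in> D}"
        hence D: "total_dominating V E D" "card D = 2" "v \<in> D"
          using G2 unfolding gamma_t_sets_def by auto
        obtain r where r: "r \<in> D" "E v r" using D assms(6) unfolding TD by blast
        have rN: "r \<in> N" using r Nd inV by blast
        have "r \<noteq> v" using rN vN by blast
        hence "{v,r} = D" using card_subset_eq[OF finD[OF D(1)], of "{v,r}"] r D by auto
        then show "D \<in> (\<lambda>u. {v,u}) ` N" using rN by blast
      qed
      hence "TDV V E v \<le> card ((\<lambda>u. {v,u}) ` N)" unfolding TDV_def
        using finN by (intro card_mono) auto
      also have "\<dots> \<le> n - 3" using card_image_le[OF finN] cN by metis
      finally show ?thesis using G2 by blast
    next
      assume G3: "gamma_t V E = 3"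
      define A where "A = {x \<in> N. E a x}"
      define B where "B = {x \<in> N. E b x}"
      have AB: "A \<inter> B = {}"
      proof (rule ccontr)
        assume "A \<inter> B \<noteq> {}"
        then obtain x where x: "x \<in> N" "E a x" "E b x" unfolding A_def B_def by blast
        have "total_dominating V E {v,x}"
          unfolding TD using x NV assms(6) Vs Nd sym by blast
        moreover have "card {v,x} \<le> 2" by (simp add: card_insert_le_m1)
        ultimately show False using gt_le G3 by fastforce
      qed
      define S1 where "S1 = (\<lambda>(x,y). {v,x,y}) ` (A \<times> B)"
      define S2 where "S2 = (\<lambda>x. {v,x,a}) ` A"
      define S3 where "S3 = (\<lambda>x. {v,x,b}) ` B"
      have finA: "finite A" "finite B" using finN unfolding A_def B_def by auto
      have sub: "{D \<in> gamma_t_sets V E. v \<in> D} \<subseteq> S1 \<union> S2 \<union> S3"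
      proof
        fix D assume "D \<in> {D \<in> gamma_t_sets V E. v \<in> D}"
        hence D: "total_dominating V E D" "card D = 3" "v \<in> D"
          using G3 unfolding gamma_t_sets_def by auto
        have fD: "finite D" using finD[OF D(1)] .
        obtain p where p: "p \<in> D" "E a p" using D aV unfolding TD by blast
        obtain q where q: "q \<in> D" "E b q" using D aV unfolding TD by blast
        obtain r where r: "r \<in> D" "E v r" using D assms(6) unfolding TD by blast
        have rN: "r \<in> N" using r Nd inV by blast
        have pV: "p = v \<or> p \<in> N \<or> p = a \<or> p = b" using Vs inV p(2) by blast
        have qV: "q = v \<or> q \<in> N \<or> q = a \<or> q = b" using Vs inV q(2) by blast
        show "D \<in> S1 \<union> S2 \<union> S3"
        proof (cases "p \<in> N")
          case pN: True
          hence pA: "p \<in> A" using p unfolding A_def by blast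
          show ?thesis
          proof (cases "q \<in> N")
            case True
            hence qB: "q \<in> B" using q unfolding B_def by blast
            have "p \<noteq> q" using pA qB AB by blast
            moreover have "p \<noteq> v" "q \<noteq> v" using pN True vN by blast+
            ultimately have "card {v,p,q} = 3" by simp
            hence "{v,p,q} = D" using card_subset_eq[OF fD, of "{v,p,q}"] p q D by auto
            then show ?thesis unfolding S1_def using pA qB by blast
          next
            case False
            hence qa: "q = a" using qV q(2) nva irr by blast
            have "p \<noteq> a" "p \<noteq> v" "a \<noteq> v" using pN aV vN by blast+
            hence "card {v,p,a} = 3" by simp
            hence "{v,p,a} = D" using card_subset_eq[OF fD, of "{v,p,a}"] p q qa D by auto
            then show ?thesis unfolding S2_def using pA by blast
          qed
        next
          case False
          hence pb: "p = b" using pV p(2) nva irr by blast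
          have "r \<noteq> b" "r \<noteq> v" "b \<noteq> v" using rN aV vN by blast+
          hence c3: "card {v,r,b} = 3" by simp
          hence Deq: "{v,r,b} = D" using card_subset_eq[OF fD, of "{v,r,b}"] p r pb D by auto
          have "q = r" using q Deq nva irr by blast
          hence "r \<in> B" using q rN unfolding B_def by blast
          then show ?thesis unfolding S3_def using Deq by blast
        qed
      qed
      have "TDV V E v \<le> card (S1 \<union> S2 \<union> S3)" unfolding TDV_def
        using sub finA unfolding S1_def S2_def S3_def by (intro card_mono) auto
      also have "\<dots> \<le> card S1 + card S2 + card S3"
        by (meson card_Un_le add_le_mono order_trans le_refl)
      also have "\<dots> \<le> card A * card B + card A + card B"
      proof -
        have "card S1 \<le> card (A \<times> B)" unfolding S1_def using finA by (intro card_image_le) auto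
        moreover have "card S2 \<le> card A" unfolding S2_def using finA by (intro card_image_le) auto
        moreover have "card S3 \<le> card B" unfolding S3_def using finA by (intro card_image_le) auto
        ultimately show ?thesis by (simp add: card_cartesian_product)
      qed
      finally have T: "TDV V E v \<le> card A * card B + card A + card B" .
      have "card A + card B = card (A \<union> B)" using card_Un_disjoint[OF finA AB] by simp
      also have "\<dots> \<le> card N" using finN unfolding A_def B_def by (intro card_mono) auto
      finally have sAB: "card A + card B \<le> n - 3" using cN by simp
      define x where "x = real (card A)"
      define y where "y = real (card B)"
      have sxy: "x + y \<le> real n - 3" using sAB n5 unfolding x_def y_def by linarith
      have xy0: "0 \<le> x" "0 \<le> y" unfolding x_def y_def by auto
      have "real (TDV V E v) \<le> x * y + x + y" using T unfolding x_def y_def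
        by (metis of_nat_add of_nat_le_iff of_nat_mult)
      also have "\<dots> \<le> ((real n - 3) / 2)^2 + 2 * (real n - 4)"
      proof -
        have e: "(x + y)^2 = 4 * (x * y) + (x - y)^2" by (simp add: power2_eq_square algebra_simps)
        have "4 * (x * y) \<le> (x + y)^2" unfolding e using zero_le_power2[of "x - y"] by linarith
        also have "\<dots> \<le> (real n - 3)^2" using sxy xy0 by (intro power_mono) auto
        finally have "x * y \<le> ((real n - 3) / 2)^2" by (simp add: power_divide)
        moreover have "x + y \<le> 2 * (real n - 4)" using sxy n5 of_nat_le_iff[of 5 n] by simp
        ultimately show ?thesis by linarith
      qed
      finally show ?thesis using G3 by blast
    qed
  qed
  show ?thesis using part1 part2 by blast
qed

end
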